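(* Let $\mathcal{K}$ be a discrete index set and, for each $k\in\mathcal{K}$, let $\Theta_k\subseteq\mathbb{R}^{n_k}$. Let $\pi$ be a probability distribution on $\mathcal{X}=\bigcup_{k\in\mathcal{K}}(\{k\}\times\Theta_k)$ with density $\pi(\mathbf{x})=\pi(k)\pi_k(\boldsymbol\theta_k)$, where $\pi(k)$ is the marginal probability of $k$ and $\pi_k$ the conditional density. Let $\nu$ be a univariate reference distribution with density, and for each $k$ let $T_k:\mathbb{R}^{n_k}\to\mathbb{R}^{n_k}$ be a diffeomorphism with $T_k\sharp\pi_k=\otimes_{n_k}\nu$. Consider RJMCMC across-model proposals from $(k,\boldsymbol\theta_k)$ to $(k',\boldsymbol\theta'_{k'})$, $k'\sim j_k$, constructed as follows, where for $n_{k'}\ge n_k$ with $w_k=n_{k'}-n_k$, $\bar h_{k,k'}:\mathbb{R}^{n_k}\times\mathbb{R}^{w_k}\to\mathbb{R}^{n_{k'}}$ is a volume-preserving diffeomorphism with $\bar h_{k,k'}\sharp\otimes_{n_{k'}}\nu=\otimes_{n_{k'}}\nu$: if $n_{k'}\ge n_k$, set $\mathbf{z}_k=T_k(\boldsymbol\theta_k)$, draw $\mathbf{u}_k\sim\otimes_{w_k}\nu$, and set $\boldsymbol\theta'_{k'}=T_{k'}^{-1}(\bar h_{k,k'}(\mathbf{z}_k,\mathbf{u}_k))$; if $n_{k'}<n_k$, set $(\mathbf{z}_{k'},\mathbf{u}_{k'})=\bar h_{k',k}^{-1}(T_k(\boldsymbol\theta_k))$, discard $\mathbf{u}_{k'}$,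 and set $\boldsymbol\theta'_{k'}=T_{k'}^{-1}(\mathbf{z}_{k'})$. These are accepted with the standard RJMCMC acceptance probability $$\alpha(\mathbf{x},\mathbf{x}')=1\wedge\frac{\pi(\mathbf{x}')\,j_{k'}(k)\,g_{k',k}(\mathbf{u}_{k'})}{\pi(\mathbf{x})\,j_k(k')\,g_{k,k'}(\mathbf{u}_k)}\,\big|J_{h_{k,k'}}(\boldsymbol\theta_k,\mathbf{u}_k)\big|,$$ where $h_{k,k'}$ is the composite map $(\boldsymbol\theta_k,\mathbf{u}_k)\mapsto(\boldsymbol\theta'_{k'},\mathbf{u}_{k'})$ and $g_{k,k'}$, $g_{k',k}$ are the densities ($\otimes_{w}\nu$, or $1$ if the auxiliary vector is empty) of the auxiliary variables of the forward and reverse moves. If the model-jump distributions $\{j_k\}$ are chosen such that $$\pi(k')\,j_{k'}(k)=\pi(k)\,j_k(k')\quad\text{for all }k,k'\in\mathcal{K},$$ then the proposal is rejection-free, i.e. $\alpha(\mathbf{x},\mathbf{x}')=1$ for every proposed across-model move.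
   Context: For a map $T$ and distribution $\mu$, $T\sharp\mu$ denotes the pushforward. $\otimes_n\nu$ is the $n$-fold product distribution of $\nu$. $|J_f|$ is the absolute Jacobian determinant. $j_k(k')$ is the probability of proposing model $k'$ from model $k$; $\wedge$ denotes minimum. A diffeomorphism is volume-preserving if its absolute Jacobian determinant is identically $1$. *)

theory Defs
  imports "HOL-Analysis.Analysis"
begin

text \<open>The dimension n_k varies with the model index k, so R^n is represented by
  functions nat => real that vanish from index n on.\<close>

definition Rn :: "nat \<Rightarrow> (nat \<Rightarrow> real) set" where
  "Rn n = {x. \<forall>i\<ge>n. x i = 0}"

definition vnorm :: "nat \<Rightarrow> (nat \<Rightarrow> real) \<Rightarrow> real" where
  "vnorm n x = sqrt (\<Sum>i<n. (x i)\<^sup>2)"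

definition Leb :: "nat \<Rightarrow> (nat \<Rightarrow> real) measure" where
  "Leb n = PiM {..<n} (\<lambda>_. lborel)"

definition zpad :: "nat \<Rightarrow> (nat \<Rightarrow> real) \<Rightarrow> (nat \<Rightarrow> real)" where
  "zpad n x = (\<lambda>i. if i < n then x i else 0)"

definition takev :: "nat \<Rightarrow> (nat \<Rightarrow> real) \<Rightarrow> (nat \<Rightarrow> real)" where
  "takev n v = (\<lambda>i. if i < n then v i else 0)"

definition dropv :: "nat \<Rightarrow> (nat \<Rightarrow> real) \<Rightarrow> (nat \<Rightarrow> real)" where
  "dropv n v = (\<lambda>i. v (i + n))"

definition joinv :: "nat \<Rightarrow> (nat \<Rightarrow> real) \<Rightarrow> (nat \<Rightarrow> real) \<Rightarrow> (nat \<Rightarrow> real)" where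
  "joinv n z u = (\<lambda>i. if i < n then z i else u (i - n))"

text \<open>Frechet derivative of f : R^n -> R^m at x with Jacobian matrix A (entries A i j, i<m, j<n).
  The filter uses the product topology on nat => real, which on Rn n is the Euclidean one.\<close>
definition has_jacobian ::
  "nat \<Rightarrow> nat \<Rightarrow> ((nat \<Rightarrow> real) \<Rightarrow> (nat \<Rightarrow> real)) \<Rightarrow> (nat \<Rightarrow> nat \<Rightarrow> real) \<Rightarrow> (nat \<Rightarrow> real) \<Rightarrow> bool"
  where
  "has_jacobian n m f A x \<longleftrightarrow>
     ((\<lambda>y. vnorm m (\<lambda>i. f y i - f x i - (\<Sum>j<n. A i j * (y j - x j))) / vnorm n (\<lambda>i. y i - x i))
        \<longlongrightarrow> 0) (at x within Rn n)"

definition detn :: "nat \<Rightarrow> (nat \<Rightarrow> nat \<Rightarrow> real) \<Rightarrow> real" where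
  "detn n A = (\<Sum>p | p permutes {..<n}. of_int (sign p) * (\<Prod>i<n. A i (p i)))"

definition jacdet :: "nat \<Rightarrow> ((nat \<Rightarrow> real) \<Rightarrow> (nat \<Rightarrow> real)) \<Rightarrow> (nat \<Rightarrow> real) \<Rightarrow> real" where
  "jacdet n f x = detn n (SOME A. has_jacobian n n f A x)"

definition C1_on :: "nat \<Rightarrow> nat \<Rightarrow> ((nat \<Rightarrow> real) \<Rightarrow> (nat \<Rightarrow> real)) \<Rightarrow> bool" where
  "C1_on n m f \<longleftrightarrow> (\<forall>x\<in>Rn n. f x \<in> Rn m) \<and>
     (\<exists>A. (\<forall>x\<in>Rn n. has_jacobian n m f (A x) x) \<and>
          (\<forall>i<m. \<forall>j<n. continuous_on (Rn n) (\<lambda>x. A x i j)))"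

definition diffeo :: "nat \<Rightarrow> ((nat \<Rightarrow> real) \<Rightarrow> (nat \<Rightarrow> real)) \<Rightarrow> bool" where
  "diffeo n f \<longleftrightarrow> bij_betw f (Rn n) (Rn n) \<and> C1_on n n f \<and> C1_on n n (inv_into (Rn n) f)"

definition volume_preserving :: "nat \<Rightarrow> ((nat \<Rightarrow> real) \<Rightarrow> (nat \<Rightarrow> real)) \<Rightarrow> bool" where
  "volume_preserving n f \<longleftrightarrow> (\<forall>x\<in>Rn n. \<bar>jacdet n f x\<bar> = 1)"

definition prod_dens :: "(real \<Rightarrow> real) \<Rightarrow> nat \<Rightarrow> (nat \<Rightarrow> real) \<Rightarrow> real" where
  "prod_dens \<nu> n x = (\<Prod>i<n. \<nu> (x i))"

text \<open>T # p = q for a diffeomorphism T of R^n, stated at the level of densities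
  (change of variables formula): p(x) = q(T x) |J_T(x)|.\<close>
definition pushforward_dens ::
  "nat \<Rightarrow> ((nat \<Rightarrow> real) \<Rightarrow> (nat \<Rightarrow> real)) \<Rightarrow> ((nat \<Rightarrow> real) \<Rightarrow> real) \<Rightarrow> ((nat \<Rightarrow> real) \<Rightarrow> real) \<Rightarrow> bool"
  where
  "pushforward_dens n T p q \<longleftrightarrow> (\<forall>x\<in>Rn n. p x = q (T x) * \<bar>jacdet n T x\<bar>)"

text \<open>Composite map h_{k,k'}: (theta_k, u_k) |-> (theta'_{k'}, u_{k'}), both sides encoded as
  joined vectors in R^(max n_k n_{k'}).\<close>
definition hmap ::
  "('k \<Rightarrow> nat) \<Rightarrow> ('k \<Rightarrow> (nat \<Rightarrow> real) \<Rightarrow> (nat \<Rightarrow> real))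
   \<Rightarrow> ('k \<Rightarrow> 'k \<Rightarrow> (nat \<Rightarrow> real) \<Rightarrow> (nat \<Rightarrow> real)) \<Rightarrow> 'k \<Rightarrow> 'k \<Rightarrow> (nat \<Rightarrow> real) \<Rightarrow> (nat \<Rightarrow> real)"
  where
  "hmap n T hbar k k' v =
     (if n k \<le> n k' then
        inv_into (Rn (n k')) (T k')
          (hbar k k' (joinv (n k) (T k (takev (n k) v)) (dropv (n k) v)))
      else
        (let zu = inv_into (Rn (n k)) (hbar k' k) (T k v)
         in joinv (n k') (inv_into (Rn (n k')) (T k') (takev (n k') zu)) (dropv (n k') zu)))"

text \<open>The forward auxiliary dimension is n k' - n k (truncated to 0), the reverse one
  n k - n k' (truncated to 0); prod_dens over dimension 0 is 1.\<close>
definition accept ::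
  "('k \<Rightarrow> nat) \<Rightarrow> ('k \<Rightarrow> real) \<Rightarrow> ('k \<Rightarrow> (nat \<Rightarrow> real) \<Rightarrow> real) \<Rightarrow> ('k \<Rightarrow> 'k \<Rightarrow> real)
   \<Rightarrow> (real \<Rightarrow> real) \<Rightarrow> ('k \<Rightarrow> (nat \<Rightarrow> real) \<Rightarrow> (nat \<Rightarrow> real))
   \<Rightarrow> ('k \<Rightarrow> 'k \<Rightarrow> (nat \<Rightarrow> real) \<Rightarrow> (nat \<Rightarrow> real))
   \<Rightarrow> 'k \<Rightarrow> (nat \<Rightarrow> real) \<Rightarrow> (nat \<Rightarrow> real) \<Rightarrow> 'k \<Rightarrow> real"
  where
  "accept n piK pic j \<nu> T hbar k \<theta> u k' =
     (let D = max (n k) (n k');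
          v = joinv (n k) \<theta> u;
          w = hmap n T hbar k k' v;
          \<theta>' = takev (n k') w;
          u' = dropv (n k') w
      in min 1 ((piK k' * pic k' \<theta>' * j k' k * prod_dens \<nu> (n k - n k') u')
                / (piK k * pic k \<theta> * j k k' * prod_dens \<nu> (n k' - n k) u)
                * \<bar>jacdet D (hmap n T hbar k k') v\<bar>))"

end

theory Submission
  imports Defs "Jordan_Normal_Form.Determinant"
begin


lemma vnorm_L2: "vnorm n x = L2_set x {..<n}"
  unfolding vnorm_def L2_set_def by simp

lemma vnorm_nonneg: "0 \<le> vnorm n x"
  by (simp add: vnorm_L2)

lemma vnorm_comp: "i < n \<Longrightarrow> \<bar>x i\<bar> \<le> vnorm n x"
  unfolding vnorm_def by (rule real_le_rsqrt) (auto intro!: member_le_sum)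

lemma vnorm_triangle: "vnorm n (\<lambda>i. a i + b i) \<le> vnorm n a + vnorm n b"
  unfolding vnorm_L2 by (rule L2_set_triangle_ineq)

lemma vnorm_le_sum: "vnorm n x \<le> (\<Sum>i<n. \<bar>x i\<bar>)"
  unfolding vnorm_L2 by (rule L2_set_le_sum_abs)

lemma vnorm_cong: "(\<And>i. i < n \<Longrightarrow> x i = y i) \<Longrightarrow> vnorm n x = vnorm n y"
  unfolding vnorm_def by simp

lemma vnorm_mono_dim: "a \<le> D \<Longrightarrow> vnorm a x \<le> vnorm D x"
  unfolding vnorm_def by (intro real_sqrt_le_mono sum_mono2) auto

lemma vnorm_ext_zero: assumes "a \<le> D" "\<And>i. a \<le> i \<Longrightarrow> i < D \<Longrightarrow> x i = 0"
  shows "vnorm D x = vnorm a x"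
proof -
  have "(\<Sum>i<D. (x i)\<^sup>2) = (\<Sum>i<a. (x i)\<^sup>2)"
    using assms by (intro sum.mono_neutral_right) auto
  then show ?thesis unfolding vnorm_def by simp
qed

lemma vnorm_zero_iff: "vnorm n x = 0 \<longleftrightarrow> (\<forall>i<n. x i = 0)"
  unfolding vnorm_L2 by (subst L2_set_eq_0_iff) auto

definition mnorm :: "nat \<Rightarrow> nat \<Rightarrow> (nat \<Rightarrow> nat \<Rightarrow> real) \<Rightarrow> real" where
  "mnorm m n A = (\<Sum>i<m. \<Sum>j<n. \<bar>A i j\<bar>)"

lemma mnorm_nonneg: "0 \<le> mnorm m n A"
  unfolding mnorm_def by (intro sum_nonneg) auto

lemma vnorm_lin: "vnorm m (\<lambda>i. \<Sum>j<n. A i j * w j) \<le> mnorm m n A * vnorm n w"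
proof -
  have "vnorm m (\<lambda>i. \<Sum>j<n. A i j * w j) \<le> (\<Sum>i<m. \<bar>\<Sum>j<n. A i j * w j\<bar>)"
    by (rule vnorm_le_sum)
  also have "\<dots> \<le> (\<Sum>i<m. \<Sum>j<n. \<bar>A i j\<bar> * vnorm n w)"
  proof (intro sum_mono)
    fix i assume "i \<in> {..<m}"
    have "\<bar>\<Sum>j<n. A i j * w j\<bar> \<le> (\<Sum>j<n. \<bar>A i j * w j\<bar>)" by (rule sum_abs)
    also have "\<dots> \<le> (\<Sum>j<n. \<bar>A i j\<bar> * vnorm n w)"
      by (intro sum_mono) (auto simp: abs_mult intro!: mult_left_mono vnorm_comp)
    finally show "\<bar>\<Sum>j<n. A i j * w j\<bar> \<le> (\<Sum>j<n. \<bar>A i j\<bar> * vnorm n w)" .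
  qed
  also have "\<dots> = mnorm m n A * vnorm n w"
    unfolding mnorm_def by (simp add: sum_distrib_right)
  finally show ?thesis .
qed

definition hj :: "nat \<Rightarrow> nat \<Rightarrow> ((nat \<Rightarrow> real) \<Rightarrow> (nat \<Rightarrow> real)) \<Rightarrow> (nat \<Rightarrow> nat \<Rightarrow> real) \<Rightarrow> (nat \<Rightarrow> real) \<Rightarrow> bool"
  where "hj n m f A x \<longleftrightarrow> (\<forall>e>0. \<exists>d>0. \<forall>y\<in>Rn n. vnorm n (\<lambda>i. y i - x i) < d \<longrightarrow>
     vnorm m (\<lambda>i. f y i - f x i - (\<Sum>j<n. A i j * (y j - x j))) \<le> e * vnorm n (\<lambda>i. y i - x i))"

lemma Rn_diff_zero: "x \<in> Rn n \<Longrightarrow> y \<in> Rn n \<Longrightarrow> vnorm n (\<lambda>i. y i - x i) = 0 \<Longrightarrow> y = x"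
proof (rule ext)
  fix i assume x: "x \<in> Rn n" and y: "y \<in> Rn n" and z: "vnorm n (\<lambda>i. y i - x i) = 0"
  show "y i = x i"
  proof (cases "i < n")
    case True then show ?thesis using z by (simp add: vnorm_zero_iff)
  next
    case False then show ?thesis using x y by (simp add: Rn_def)
  qed
qed

lemma hj_imp_has_jacobian: assumes "hj n m f A x" shows "has_jacobian n m f A x"
proof -
  let ?N = "\<lambda>y. vnorm n (\<lambda>i. y i - x i)"
  let ?E = "\<lambda>y. vnorm m (\<lambda>i. f y i - f x i - (\<Sum>j<n. A i j * (y j - x j)))"
  have cont: "continuous_on UNIV ?N"
    unfolding vnorm_def by (intro continuous_intros continuous_on_product_coordinates)
  have N0: "?N x = 0" unfolding vnorm_def by simp
  show ?thesis unfolding has_jacobian_def tendsto_iff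
  proof (intro allI impI)
    fix e :: real assume e: "e > 0"
    obtain d where d: "d > 0" and hd: "\<And>y. y \<in> Rn n \<Longrightarrow> ?N y < d \<Longrightarrow> ?E y \<le> (e/2) * ?N y"
      using assms[unfolded hj_def, rule_format, of "e/2"] e by auto
    have "(?N \<longlongrightarrow> ?N x) (at x)"
      using cont continuous_on_def by blast
    then have "eventually (\<lambda>y. ?N y < d) (at x)"
      using d N0 by (intro order_tendstoD) simp_all
    then have ev: "eventually (\<lambda>y. ?N y < d) (at x within Rn n)"
      by (auto simp: eventually_at_filter elim: eventually_mono)
    have "eventually (\<lambda>y. y \<in> Rn n) (at x within Rn n)"
      by (simp add: eventually_at_filter)
    with ev show "eventually (\<lambda>y. dist (?E y / ?N y) 0 < e) (at x within Rn n)"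
    proof (eventually_elim)
      case (elim y)
      show ?case
      proof (cases "?N y = 0")
        case True then show ?thesis using e by simp
      next
        case False
        then have pos: "?N y > 0" using vnorm_nonneg[of n "\<lambda>i. y i - x i"] by linarith
        have "?E y / ?N y \<le> e/2" using hd[OF elim(2) elim(1)] pos by (simp add: divide_le_eq)
        moreover have nn: "?E y / ?N y \<ge> 0" using vnorm_nonneg[of m] vnorm_nonneg[of n] by simp
        moreover have "dist (?E y / ?N y) 0 = ?E y / ?N y"
          by (simp only: dist_real_def diff_0_right abs_of_nonneg[OF nn])
        ultimately show ?thesis using e by linarith
      qed
    qed
  qed
qed

lemma has_jacobian_imp_hj: assumes hJ: "has_jacobian n m f A x" and x: "x \<in> Rn n" shows "hj n m f A x"
  unfolding hj_def
proof (intro allI impI)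
  let ?N = "\<lambda>y. vnorm n (\<lambda>i. y i - x i)"
  let ?E = "\<lambda>y. vnorm m (\<lambda>i. f y i - f x i - (\<Sum>j<n. A i j * (y j - x j)))"
  fix e :: real assume e: "e > 0"
  from hJ have "eventually (\<lambda>y. dist (?E y / ?N y) 0 < e) (at x within Rn n)"
    unfolding has_jacobian_def tendsto_iff using e by blast
  then obtain U where U: "open U" "x \<in> U" "\<forall>y\<in>U. y \<noteq> x \<longrightarrow> y \<in> Rn n \<longrightarrow> dist (?E y / ?N y) 0 < e"
    unfolding eventually_at_topological by blast
  from U have "openin (product_topology (\<lambda>i. euclidean) UNIV) U" by (simp add: open_fun_def)
  from product_topology_open_contains_basis[OF this U(2)] obtain X where
    X: "x \<in> (\<Pi>\<^sub>E i\<in>UNIV. X i)" "\<And>i. open (X i)" "(\<Pi>\<^sub>E i\<in>UNIV. X i) \<subseteq> U"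
    by auto
  have "\<forall>i\<in>{..<n}. \<exists>r>0. \<forall>z. \<bar>z - x i\<bar> < r \<longrightarrow> z \<in> X i"
  proof
    fix i assume "i \<in> {..<n}"
    have "x i \<in> X i" using X(1) by auto
    then obtain r where "r > 0" "\<forall>z. dist z (x i) < r \<longrightarrow> z \<in> X i"
      using X(2)[of i] unfolding open_dist by blast
    then show "\<exists>r>0. \<forall>z. \<bar>z - x i\<bar> < r \<longrightarrow> z \<in> X i" by (auto simp: dist_real_def)
  qed
  then obtain R where R: "\<And>i. i < n \<Longrightarrow> R i > 0" "\<And>i z. i < n \<Longrightarrow> \<bar>z - x i\<bar> < R i \<Longrightarrow> z \<in> X i"
    by (metis lessThan_iff)
  define d where "d = Min (insert 1 (R ` {..<n}))"
  have d: "d > 0" unfolding d_def using R(1) by (subst Min_gr_iff) auto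
  have dR: "d \<le> R i" if "i < n" for i unfolding d_def using that by (intro Min_le) auto
  show "\<exists>d>0. \<forall>y\<in>Rn n. ?N y < d \<longrightarrow> ?E y \<le> e * ?N y"
  proof (intro exI[of _ d] conjI ballI impI d)
    fix y assume y: "y \<in> Rn n" and yd: "?N y < d"
    show "?E y \<le> e * ?N y"
    proof (cases "y = x")
      case True then show ?thesis by (simp add: vnorm_def)
    next
      case False
      have "y \<in> (\<Pi>\<^sub>E i\<in>UNIV. X i)"
      proof (unfold PiE_UNIV_domain, rule Pi_I)
        fix i :: nat assume "i \<in> UNIV" show "y i \<in> X i"
        proof (cases "i < n")
          case True
          have "\<bar>y i - x i\<bar> \<le> ?N y" using vnorm_comp[OF True, of "\<lambda>i. y i - x i"] by simp
          then show ?thesis using R(2)[OF True] dR[OF True] yd by simp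
        next
          case False
          then have "y i = x i" using x y by (simp add: Rn_def)
          then show ?thesis using X(1) by auto
        qed
      qed
      then have "dist (?E y / ?N y) 0 < e" using U(3) X(3) False y by blast
      moreover have "?N y \<noteq> 0" using Rn_diff_zero[OF x y] False by blast
      then have pos: "?N y > 0" using vnorm_nonneg[of n "\<lambda>i. y i - x i"] by linarith
      ultimately show ?thesis using vnorm_nonneg[of m] by (simp add: dist_real_def divide_less_eq)
    qed
  qed
qed

lemma hj_iff: "x \<in> Rn n \<Longrightarrow> has_jacobian n m f A x \<longleftrightarrow> hj n m f A x"
  using hj_imp_has_jacobian has_jacobian_imp_hj by blast



lemma hj_cong: assumes "x \<in> Rn n" "\<And>y. y \<in> Rn n \<Longrightarrow> f y = g y"
  shows "hj n m f A x \<longleftrightarrow> hj n m g A x"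
  unfolding hj_def using assms by simp

lemma hj_unique: assumes hA: "hj n m f A x" and hB: "hj n m f B x" and x: "x \<in> Rn n"
  and i: "i < m" and j: "j < n"
  shows "A i j = B i j"
proof (rule ccontr)
  assume ne: "A i j \<noteq> B i j"
  define c where "c = \<bar>A i j - B i j\<bar>"
  have c: "c > 0" using ne unfolding c_def by simp
  obtain d1 where d1: "d1 > 0" and h1: "\<And>y. y \<in> Rn n \<Longrightarrow> vnorm n (\<lambda>i. y i - x i) < d1 \<Longrightarrow>
     vnorm m (\<lambda>i. f y i - f x i - (\<Sum>j<n. A i j * (y j - x j))) \<le> (c/4) * vnorm n (\<lambda>i. y i - x i)"
    using hA[unfolded hj_def, rule_format, of "c/4"] c by auto
  obtain d2 where d2: "d2 > 0" and h2: "\<And>y. y \<in> Rn n \<Longrightarrow> vnorm n (\<lambda>i. y i - x i) < d2 \<Longrightarrow>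
     vnorm m (\<lambda>i. f y i - f x i - (\<Sum>j<n. B i j * (y j - x j))) \<le> (c/4) * vnorm n (\<lambda>i. y i - x i)"
    using hB[unfolded hj_def, rule_format, of "c/4"] c by auto
  define t where "t = min d1 d2 / 2"
  have t: "t > 0" "t < d1" "t < d2" using d1 d2 unfolding t_def by auto
  define y where "y = (\<lambda>l. if l = j then x l + t else x l)"
  have y: "y \<in> Rn n" using x j unfolding y_def Rn_def by auto
  have dy: "(\<lambda>l. y l - x l) = (\<lambda>l. if l = j then t else 0)" unfolding y_def by auto
  have Ny: "vnorm n (\<lambda>l. y l - x l) = t"
  proof -
    have "(\<lambda>l. (if l = j then t else 0)\<^sup>2) = (\<lambda>l. if l = j then t\<^sup>2 else 0)" by auto
    then have "(\<Sum>l<n. (if l = j then t else 0)\<^sup>2) = t\<^sup>2"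
      using j by (simp only:) (simp add: sum.delta)
    then show ?thesis unfolding dy vnorm_def using t by simp
  qed
  have sA: "(\<Sum>l<n. A i l * (y l - x l)) = A i j * t" for A :: "nat \<Rightarrow> nat \<Rightarrow> real"
  proof -
    have "(\<Sum>l<n. A i l * (y l - x l)) = (\<Sum>l<n. if l = j then A i l * t else 0)"
      by (intro sum.cong) (auto simp: y_def)
    then show ?thesis using j by simp
  qed
  have e1: "\<bar>f y i - f x i - A i j * t\<bar> \<le> (c/4) * t"
    using vnorm_comp[OF i, of "\<lambda>i. f y i - f x i - (\<Sum>j<n. A i j * (y j - x j))"] h1[OF y] t Ny sA[of A]
    by simp
  have e2: "\<bar>f y i - f x i - B i j * t\<bar> \<le> (c/4) * t"
    using vnorm_comp[OF i, of "\<lambda>i. f y i - f x i - (\<Sum>j<n. B i j * (y j - x j))"] h2[OF y] t Ny sA[of B]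
    by simp
  have "c * t = \<bar>(f y i - f x i - B i j * t) - (f y i - f x i - A i j * t)\<bar>"
    unfolding c_def using t by (simp add: abs_mult left_diff_distrib[symmetric])
  also have "\<dots> \<le> (c/4) * t + (c/4) * t" using e1 e2 by linarith
  finally show False using c t by (simp add: mult_le_cancel_right)
qed

lemma delta_sum: "(\<Sum>j<(n::nat). (if i = j then 1 else 0) * (z j::real)) = (if i < n then z i else 0)"
proof -
  have "(\<lambda>j. (if i = j then 1 else 0) * (z j::real)) = (\<lambda>j. if i = j then z j else 0)" by auto
  then show ?thesis by (simp only:) (simp add: sum.delta sum.delta')
qed

lemma hj_id: "hj n n (\<lambda>y. y) (\<lambda>i j. if i = j then 1 else 0) x"
proof -
  have "vnorm n (\<lambda>i. y i - x i - (\<Sum>j<(n::nat). (if i = j then 1 else 0) * (y j - x j))) = 0" for y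
    by (simp add: vnorm_zero_iff delta_sum)
  then show ?thesis unfolding hj_def
    by (auto intro!: exI[of _ 1] vnorm_nonneg mult_nonneg_nonneg)
qed



lemma sum_swap_mat: "(\<Sum>j<n. (\<Sum>l<m. B i l * A l j) * (d j::real)) = (\<Sum>l<m. B i l * (\<Sum>j<n. A l j * d j))"
proof -
  have "(\<Sum>j<n. (\<Sum>l<m. B i l * A l j) * (d j::real)) = (\<Sum>j<n. \<Sum>l<m. B i l * (A l j * d j))"
    by (simp add: sum_distrib_right mult.assoc)
  also have "\<dots> = (\<Sum>l<m. \<Sum>j<n. B i l * (A l j * d j))" by (rule sum.swap)
  also have "\<dots> = (\<Sum>l<m. B i l * (\<Sum>j<n. A l j * d j))" by (simp add: sum_distrib_left)
  finally show ?thesis .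
qed

lemma hj_chain:
  assumes hf: "hj n m f A x" and hg: "hj m p g B (f x)" and fmap: "\<forall>y\<in>Rn n. f y \<in> Rn m"
  shows "hj n p (\<lambda>y. g (f y)) (\<lambda>i j. \<Sum>l<m. B i l * A l j) x"
  unfolding hj_def
proof (intro allI impI)
  fix e :: real assume e: "e > 0"
  define a where "a = mnorm m n A"
  define b where "b = mnorm p m B"
  have a: "a \<ge> 0" and b: "b \<ge> 0" unfolding a_def b_def by (simp_all add: mnorm_nonneg)
  define e1 where "e1 = min 1 (e / (2 * (b + 1)))"
  define e2 where "e2 = e / (2 * (a + 2))"
  have e1: "e1 > 0" "e1 \<le> 1" "b * e1 \<le> e / 2"
  proof -
    show "e1 > 0" "e1 \<le> 1" unfolding e1_def using e b by auto
    have "b * e1 \<le> b * (e / (2 * (b + 1)))" unfolding e1_def using b by (intro mult_left_mono) auto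
    also have "\<dots> = (e/2) * (b / (b + 1))" using b by (simp add: field_simps)
    also have "\<dots> \<le> (e/2) * 1" using b e by (intro mult_left_mono) auto
    finally show "b * e1 \<le> e / 2" by simp
  qed
  have e2: "e2 > 0" "e2 * (a + 1) \<le> e / 2"
  proof -
    show "e2 > 0" unfolding e2_def using e a by auto
    have "e2 * (a + 1) = (e/2) * ((a + 1) / (a + 2))" unfolding e2_def using a by (simp add: field_simps)
    also have "\<dots> \<le> (e/2) * 1" using a e by (intro mult_left_mono) auto
    finally show "e2 * (a + 1) \<le> e / 2" by simp
  qed
  obtain d1 where d1: "d1 > 0" and h1: "\<And>y. y \<in> Rn n \<Longrightarrow> vnorm n (\<lambda>i. y i - x i) < d1 \<Longrightarrow>
     vnorm m (\<lambda>i. f y i - f x i - (\<Sum>j<n. A i j * (y j - x j))) \<le> e1 * vnorm n (\<lambda>i. y i - x i)"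
    using hf[unfolded hj_def, rule_format, of e1] e1 by auto
  obtain d2 where d2: "d2 > 0" and h2: "\<And>z. z \<in> Rn m \<Longrightarrow> vnorm m (\<lambda>i. z i - f x i) < d2 \<Longrightarrow>
     vnorm p (\<lambda>i. g z i - g (f x) i - (\<Sum>j<m. B i j * (z j - f x j))) \<le> e2 * vnorm m (\<lambda>i. z i - f x i)"
    using hg[unfolded hj_def, rule_format, of e2] e2 by auto
  define d where "d = min d1 (d2 / (a + 2))"
  have d: "d > 0" unfolding d_def using d1 d2 a by auto
  show "\<exists>d>0. \<forall>y\<in>Rn n. vnorm n (\<lambda>i. y i - x i) < d \<longrightarrow>
      vnorm p (\<lambda>i. g (f y) i - g (f x) i - (\<Sum>j<n. (\<Sum>l<m. B i l * A l j) * (y j - x j)))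
      \<le> e * vnorm n (\<lambda>i. y i - x i)"
  proof (intro exI[of _ d] conjI ballI impI d)
    fix y assume y: "y \<in> Rn n" and yd: "vnorm n (\<lambda>i. y i - x i) < d"
    define N where "N = vnorm n (\<lambda>i. y i - x i)"
    have N: "N \<ge> 0" unfolding N_def by (rule vnorm_nonneg)
    define w where "w = (\<lambda>l. f y l - f x l)"
    define Ef where "Ef = (\<lambda>l. w l - (\<Sum>j<n. A l j * (y j - x j)))"
    have Ef: "vnorm m Ef \<le> e1 * N"
      using h1[OF y] yd unfolding Ef_def w_def N_def d_def by simp
    have "vnorm m w = vnorm m (\<lambda>l. Ef l + (\<Sum>j<n. A l j * (y j - x j)))"
      unfolding Ef_def by simp
    also have "\<dots> \<le> vnorm m Ef + vnorm m (\<lambda>l. \<Sum>j<n. A l j * (y j - x j))"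
      by (rule vnorm_triangle)
    also have "\<dots> \<le> e1 * N + a * N"
      using Ef vnorm_lin[where m=m and n=n and A=A and w="\<lambda>j. y j - x j"] unfolding a_def N_def by linarith
    also have "\<dots> \<le> (a + 1) * N" using mult_right_mono[OF e1(2) N] by (simp add: algebra_simps)
    finally have wN: "vnorm m w \<le> (a + 1) * N" .
    have "(a + 2) * N < d2"
    proof -
      have "N < d2 / (a + 2)" using yd unfolding N_def d_def by simp
      then show ?thesis using a by (simp add: field_simps)
    qed
    then have wd: "vnorm m w < d2" using wN N by (smt (verit) mult_right_mono)
    have fy: "f y \<in> Rn m" using fmap y by blast
    have Eg: "vnorm p (\<lambda>i. g (f y) i - g (f x) i - (\<Sum>l<m. B i l * w l)) \<le> e2 * vnorm m w"
      using h2[OF fy] wd unfolding w_def by simp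
    have decomp: "(\<lambda>i. g (f y) i - g (f x) i - (\<Sum>j<n. (\<Sum>l<m. B i l * A l j) * (y j - x j)))
        = (\<lambda>i. (g (f y) i - g (f x) i - (\<Sum>l<m. B i l * w l)) + (\<Sum>l<m. B i l * Ef l))"
    proof
      fix i
      have "(\<Sum>l<m. B i l * Ef l) = (\<Sum>l<m. B i l * w l) - (\<Sum>l<m. B i l * (\<Sum>j<n. A l j * (y j - x j)))"
        unfolding Ef_def by (simp add: right_diff_distrib sum_subtractf)
      then show "g (f y) i - g (f x) i - (\<Sum>j<n. (\<Sum>l<m. B i l * A l j) * (y j - x j))
        = (g (f y) i - g (f x) i - (\<Sum>l<m. B i l * w l)) + (\<Sum>l<m. B i l * Ef l)"
        using sum_swap_mat[where n=n and m=m and B=B and i=i and A=A and d="\<lambda>j. y j - x j"] by simp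
    qed
    have "vnorm p (\<lambda>i. g (f y) i - g (f x) i - (\<Sum>j<n. (\<Sum>l<m. B i l * A l j) * (y j - x j)))
        \<le> vnorm p (\<lambda>i. g (f y) i - g (f x) i - (\<Sum>l<m. B i l * w l)) + vnorm p (\<lambda>i. \<Sum>l<m. B i l * Ef l)"
      unfolding decomp by (rule vnorm_triangle)
    also have "\<dots> \<le> e2 * vnorm m w + b * vnorm m Ef"
      using Eg vnorm_lin[where m=p and n=m and A=B and w=Ef] unfolding b_def by linarith
    also have "\<dots> \<le> e2 * ((a + 1) * N) + b * (e1 * N)"
      using wN Ef e2 b by (intro add_mono mult_left_mono) auto
    also have "\<dots> = (e2 * (a + 1)) * N + (b * e1) * N" by (simp add: algebra_simps)
    also have "\<dots> \<le> (e/2) * N + (e/2) * N"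
      using e1 e2 N by (intro add_mono mult_right_mono) auto
    also have "\<dots> = e * N" by simp
    finally show "vnorm p (\<lambda>i. g (f y) i - g (f x) i - (\<Sum>j<n. (\<Sum>l<m. B i l * A l j) * (y j - x j)))
      \<le> e * vnorm n (\<lambda>i. y i - x i)" unfolding N_def .
  qed
qed



definition jm :: "nat \<Rightarrow> (nat \<Rightarrow> nat \<Rightarrow> real) \<Rightarrow> real Matrix.mat" where
  "jm n A = Matrix.mat n n (\<lambda>(i,j). A i j)"

lemma jm_carrier: "jm n A \<in> carrier_mat n n"
  unfolding jm_def by simp

lemma detn_jm: "detn n A = Determinant.det (jm n A)"
proof -
  have "(\<Prod>i<n. A i (p i)) = (\<Prod>i = 0..<n. jm n A $$ (i, p i))" if "p permutes {..<n}" for p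
  proof -
    have "(\<Prod>i<n. A i (p i)) = (\<Prod>i = 0..<n. A i (p i))" by (simp add: atLeast0LessThan)
    also have "\<dots> = (\<Prod>i = 0..<n. jm n A $$ (i, p i))"
    proof (intro prod.cong refl)
      fix x assume "x \<in> {0..<n}"
      then have x: "x < n" by simp
      then have "p x < n" using permutes_in_image[OF that, of x] by simp
      then show "A x (p x) = jm n A $$ (x, p x)" using x by (simp add: jm_def)
    qed
    finally show ?thesis .
  qed
  then show ?thesis unfolding detn_def det_def
    by (simp add: jm_def atLeast0LessThan)
qed

lemma detn_cong: assumes "\<And>i j. i < n \<Longrightarrow> j < n \<Longrightarrow> A i j = B i j" shows "detn n A = detn n B"
proof -
  have "jm n A = jm n B" unfolding jm_def using assms by (intro eq_matI) auto
  then show ?thesis by (simp add: detn_jm)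
qed

lemma detn_mmul: "detn n (\<lambda>i j. \<Sum>l<n. B i l * A l j) = detn n B * detn n A"
proof -
  have "jm n (\<lambda>i j. \<Sum>l<n. B i l * A l j) = jm n B * jm n A"
  proof (rule eq_matI)
    fix i j assume i: "i < dim_row (jm n B * jm n A)" and j: "j < dim_col (jm n B * jm n A)"
    then have i': "i < n" and j': "j < n" by (simp_all add: jm_def)
    have "(jm n B * jm n A) $$ (i, j) = Matrix.row (jm n B) i \<bullet> Matrix.col (jm n A) j"
      using i j by (simp add: index_mult_mat)
    also have "\<dots> = (\<Sum>l = 0..<n. B i l * A l j)"
      unfolding scalar_prod_def using i' j' by (intro sum.cong) (auto simp: jm_def)
    finally show "jm n (\<lambda>i j. \<Sum>l<n. B i l * A l j) $$ (i, j) = (jm n B * jm n A) $$ (i, j)"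
      using i' j' by (simp add: jm_def atLeast0LessThan)
  qed (simp_all add: jm_def)
  then show ?thesis by (simp add: detn_jm det_mult[OF jm_carrier jm_carrier])
qed

lemma detn_id: "detn n (\<lambda>i j. if i = j then 1 else 0) = 1"
proof -
  have "jm n (\<lambda>i j. if i = j then 1 else 0) = 1\<^sub>m n" unfolding jm_def by (intro eq_matI) auto
  then show ?thesis by (simp add: detn_jm)
qed

definition blk :: "nat \<Rightarrow> (nat \<Rightarrow> nat \<Rightarrow> real) \<Rightarrow> nat \<Rightarrow> nat \<Rightarrow> real" where
  "blk a A = (\<lambda>i j. if i < a then (if j < a then A i j else 0) else (if i = j then 1 else 0))"

lemma detn_blk: assumes "a \<le> D" shows "detn D (blk a A) = detn a A"
proof -
  have "jm D (blk a A) = four_block_mat (jm a A) (0\<^sub>m a (D - a)) (0\<^sub>m (D - a) a) (1\<^sub>m (D - a))"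
    using assms by (intro eq_matI) (auto simp: jm_def blk_def)
  moreover have "Determinant.det (four_block_mat (jm a A) (0\<^sub>m a (D - a)) (0\<^sub>m (D - a) a) (1\<^sub>m (D - a)))
      = Determinant.det (jm a A) * Determinant.det (1\<^sub>m (D - a) :: real Matrix.mat)"
    by (rule det_four_block_mat_lower_left_zero[OF jm_carrier]) auto
  ultimately show ?thesis by (simp add: detn_jm)
qed



lemma jacdet_hj: assumes x: "x \<in> Rn n" and h: "hj n n f A x" shows "jacdet n f x = detn n A"
proof -
  have "has_jacobian n n f A x" using h x by (simp add: hj_iff)
  then have "has_jacobian n n f (SOME A. has_jacobian n n f A x) x" by (rule someI[where P="\<lambda>A. has_jacobian n n f A x"])
  then have h': "hj n n f (SOME A. has_jacobian n n f A x) x" using x by (simp add: hj_iff)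
  show ?thesis unfolding jacdet_def
    by (rule detn_cong) (rule hj_unique[OF h' h x])
qed

lemma C1_hj: assumes "C1_on n m f" "x \<in> Rn n" obtains A where "hj n m f A x"
  using assms unfolding C1_on_def by (auto simp: hj_iff)

lemma C1_map: "C1_on n m f \<Longrightarrow> x \<in> Rn n \<Longrightarrow> f x \<in> Rn m"
  unfolding C1_on_def by auto

lemma diffeo_facts: assumes "diffeo n T"
  shows "\<And>x. x \<in> Rn n \<Longrightarrow> T x \<in> Rn n"
    and "\<And>y. y \<in> Rn n \<Longrightarrow> inv_into (Rn n) T y \<in> Rn n"
    and "\<And>y. y \<in> Rn n \<Longrightarrow> T (inv_into (Rn n) T y) = y"
    and "\<And>x. x \<in> Rn n \<Longrightarrow> inv_into (Rn n) T (T x) = x"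
  using assms unfolding diffeo_def
  by (auto simp: bij_betw_def inv_into_into f_inv_into_f)

lemma jac_inv: assumes d: "diffeo n T" and y: "y \<in> Rn n"
  shows "jacdet n T (inv_into (Rn n) T y) * jacdet n (inv_into (Rn n) T) y = 1"
proof -
  let ?S = "inv_into (Rn n) T"
  have Sy: "?S y \<in> Rn n" using diffeo_facts(2)[OF d y] .
  obtain A where A: "hj n n T A (?S y)" using C1_hj[of n n T "?S y"] d Sy unfolding diffeo_def by blast
  obtain B where B: "hj n n ?S B y" using C1_hj[of n n ?S y] d y unfolding diffeo_def by blast
  have "hj n n (\<lambda>z. T (?S z)) (\<lambda>i j. \<Sum>l<n. A i l * B l j) y"
    by (rule hj_chain[OF B A]) (use diffeo_facts(2)[OF d] in blast)
  then have C: "hj n n (\<lambda>z. z) (\<lambda>i j. \<Sum>l<n. A i l * B l j) y"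
    using hj_cong[OF y, of "\<lambda>z. T (?S z)" "\<lambda>z. z"] diffeo_facts(3)[OF d] by simp
  have "detn n (\<lambda>i j. \<Sum>l<n. A i l * B l j) = detn n (\<lambda>i j. if i = j then 1 else 0)"
    by (rule detn_cong) (rule hj_unique[OF C hj_id y])
  then have "detn n A * detn n B = 1" by (simp add: detn_mmul detn_id)
  moreover have "jacdet n T (?S y) = detn n A" by (rule jacdet_hj[OF Sy A])
  moreover have "jacdet n ?S y = detn n B" by (rule jacdet_hj[OF y B])
  ultimately show ?thesis by simp
qed

definition Gm :: "nat \<Rightarrow> ((nat \<Rightarrow> real) \<Rightarrow> (nat \<Rightarrow> real)) \<Rightarrow> (nat \<Rightarrow> real) \<Rightarrow> (nat \<Rightarrow> real)" where
  "Gm a S = (\<lambda>v. joinv a (S (takev a v)) (dropv a v))"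

lemma takev_Rn: "takev a v \<in> Rn a"
  unfolding takev_def Rn_def by auto

lemma Gm_map: assumes "\<forall>z\<in>Rn a. S z \<in> Rn a" "a \<le> D" "v \<in> Rn D" shows "Gm a S v \<in> Rn D"
proof -
  have "S (takev a v) \<in> Rn a" using assms(1) takev_Rn by blast
  then show ?thesis using assms(2,3) unfolding Gm_def Rn_def joinv_def dropv_def by auto
qed

lemma sum_blk: assumes "i < a" "a \<le> D"
  shows "(\<Sum>j<D. blk a A i j * z j) = (\<Sum>j<a. A i j * z j)"
proof -
  have "(\<Sum>j<D. blk a A i j * z j) = (\<Sum>j<a. blk a A i j * z j)"
    using assms by (intro sum.mono_neutral_right) (auto simp: blk_def)
  also have "\<dots> = (\<Sum>j<a. A i j * z j)" using assms by (intro sum.cong) (auto simp: blk_def)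
  finally show ?thesis .
qed

lemma sum_blk2: assumes "\<not> i < a" "i < D"
  shows "(\<Sum>j<D. blk a A i j * z j) = z i"
proof -
  have "(\<Sum>j<D. blk a A i j * z j) = (\<Sum>j<D. (if i = j then 1 else 0) * z j)"
    using assms by (intro sum.cong) (auto simp: blk_def)
  also have "\<dots> = z i" using assms(2) by (simp add: delta_sum)
  finally show ?thesis .
qed

lemma hj_block: assumes hS: "hj a a S A (takev a v)" and aD: "a \<le> D"
  shows "hj D D (Gm a S) (blk a A) v"
  unfolding hj_def
proof (intro allI impI)
  fix e :: real assume e: "e > 0"
  obtain d where d: "d > 0" and hd: "\<And>z. z \<in> Rn a \<Longrightarrow> vnorm a (\<lambda>i. z i - takev a v i) < d \<Longrightarrow>
     vnorm a (\<lambda>i. S z i - S (takev a v) i - (\<Sum>j<a. A i j * (z j - takev a v j))) \<le> e * vnorm a (\<lambda>i. z i - takev a v i)"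
    using hS[unfolded hj_def, rule_format, of e] e by auto
  show "\<exists>d>0. \<forall>y\<in>Rn D. vnorm D (\<lambda>i. y i - v i) < d \<longrightarrow>
      vnorm D (\<lambda>i. Gm a S y i - Gm a S v i - (\<Sum>j<D. blk a A i j * (y j - v j))) \<le> e * vnorm D (\<lambda>i. y i - v i)"
  proof (intro exI[of _ d] conjI ballI impI d)
    fix y assume y: "y \<in> Rn D" and yd: "vnorm D (\<lambda>i. y i - v i) < d"
    have eqN: "vnorm a (\<lambda>i. takev a y i - takev a v i) = vnorm a (\<lambda>i. y i - v i)"
      by (rule vnorm_cong) (simp add: takev_def)
    have leN: "vnorm a (\<lambda>i. y i - v i) \<le> vnorm D (\<lambda>i. y i - v i)" by (rule vnorm_mono_dim[OF aD])
    define ES where "ES = (\<lambda>i. S (takev a y) i - S (takev a v) i - (\<Sum>j<a. A i j * (takev a y j - takev a v j)))"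
    have ES: "vnorm a ES \<le> e * vnorm a (\<lambda>i. takev a y i - takev a v i)"
      unfolding ES_def by (rule hd[OF takev_Rn]) (use eqN leN yd in linarith)
    have "vnorm D (\<lambda>i. Gm a S y i - Gm a S v i - (\<Sum>j<D. blk a A i j * (y j - v j)))
        = vnorm D (\<lambda>i. if i < a then ES i else 0)"
    proof (rule vnorm_cong)
      fix i assume iD: "i < D"
      show "Gm a S y i - Gm a S v i - (\<Sum>j<D. blk a A i j * (y j - v j)) = (if i < a then ES i else 0)"
      proof (cases "i < a")
        case True
        have "(\<Sum>j<a. A i j * (y j - v j)) = (\<Sum>j<a. A i j * (takev a y j - takev a v j))"
          by (intro sum.cong) (auto simp: takev_def)
        then show ?thesis using True sum_blk[OF True aD, of A "\<lambda>j. y j - v j"]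
          by (simp add: Gm_def joinv_def ES_def)
      next
        case False
        then show ?thesis using sum_blk2[OF False iD, of A "\<lambda>j. y j - v j"]
          by (simp add: Gm_def joinv_def dropv_def)
      qed
    qed
    also have "\<dots> = vnorm a (\<lambda>i. if i < a then ES i else 0)"
      by (rule vnorm_ext_zero[OF aD]) simp
    also have "\<dots> = vnorm a ES" by (rule vnorm_cong) simp
    also have "\<dots> \<le> e * vnorm D (\<lambda>i. y i - v i)"
      using ES eqN leN e by (smt (verit) mult_left_mono)
    finally show "vnorm D (\<lambda>i. Gm a S y i - Gm a S v i - (\<Sum>j<D. blk a A i j * (y j - v j)))
        \<le> e * vnorm D (\<lambda>i. y i - v i)" .
  qed
qed

lemma pd_split: assumes "a \<le> D"
  shows "prod_dens \<nu> D x = prod_dens \<nu> a x * prod_dens \<nu> (D - a) (dropv a x)"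
proof -
  have "(\<Prod>i<D. \<nu> (x i)) = (\<Prod>i = 0..<a. \<nu> (x i)) * (\<Prod>i = a..<D. \<nu> (x i))"
    using assms by (simp add: atLeast0LessThan[symmetric] prod.atLeastLessThan_concat)
  moreover have "(\<Prod>i = a..<D. \<nu> (x i)) = (\<Prod>i = 0..<D - a. \<nu> (x (i + a)))"
    using assms prod.shift_bounds_nat_ivl[of "\<lambda>i. \<nu> (x i)" 0 a "D - a"] by simp
  ultimately show ?thesis unfolding prod_dens_def dropv_def by (simp add: atLeast0LessThan)
qed

lemma pd_takev: "prod_dens \<nu> a (takev a x) = prod_dens \<nu> a x"
  unfolding prod_dens_def takev_def by simp

lemma pd_joinv: "prod_dens \<nu> a (joinv a z u) = prod_dens \<nu> a z"
  unfolding prod_dens_def joinv_def by simp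

lemma dropv_joinv: "dropv a (joinv a z u) = u"
  unfolding dropv_def joinv_def by simp



lemma takev_id: "x \<in> Rn n \<Longrightarrow> takev n x = x"
  unfolding takev_def Rn_def by auto

lemma takev_joinv: "z \<in> Rn a \<Longrightarrow> takev a (joinv a z u) = z"
  unfolding takev_def joinv_def Rn_def by auto

lemma Rn0: "u \<in> Rn 0 \<Longrightarrow> u = (\<lambda>i. 0)"
  unfolding Rn_def by auto

lemma pd0: "prod_dens \<nu> 0 x = 1"
  unfolding prod_dens_def by simp

lemma final_alg:
  fixes c P JT JT' JS :: real
  assumes "c \<noteq> 0" "JT \<noteq> 0" "\<bar>JT'\<bar> * \<bar>JS\<bar> = 1"
  shows "min 1 ((c * \<bar>JT'\<bar>) / (c * \<bar>JT\<bar>) * (\<bar>JS\<bar> * \<bar>JT\<bar>)) = 1"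
proof -
  have "(c * \<bar>JT'\<bar>) / (c * \<bar>JT\<bar>) * (\<bar>JS\<bar> * \<bar>JT\<bar>) = \<bar>JT'\<bar> * \<bar>JS\<bar>"
    using assms by (simp add: field_simps)
  then show ?thesis using assms by simp
qed

theorem corollary1:
  fixes K :: "'k set"
    and n :: "'k \<Rightarrow> nat"
    and \<Theta> :: "'k \<Rightarrow> (nat \<Rightarrow> real) set"
    and piK :: "'k \<Rightarrow> real"
    and pic :: "'k \<Rightarrow> (nat \<Rightarrow> real) \<Rightarrow> real"
    and \<nu> :: "real \<Rightarrow> real"
    and T :: "'k \<Rightarrow> (nat \<Rightarrow> real) \<Rightarrow> (nat \<Rightarrow> real)"
    and hbar :: "'k \<Rightarrow> 'k \<Rightarrow> (nat \<Rightarrow> real) \<Rightarrow> (nat \<Rightarrow> real)"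
    and j :: "'k \<Rightarrow> 'k \<Rightarrow> real"
    and k k' :: 'k
    and \<theta> u :: "nat \<Rightarrow> real"
  assumes K_countable: "countable K"
    and Theta_sub: "\<forall>k\<in>K. \<Theta> k \<subseteq> Rn (n k)"
    \<comment> \<open>pi(k) is a probability mass function on K\<close>
    and piK_nonneg: "\<forall>k\<in>K. piK k \<ge> 0"
    and piK_sum: "(piK has_sum 1) K"
    \<comment> \<open>pi_k is a probability density on Theta_k\<close>
    and pic_nonneg: "\<forall>k\<in>K. \<forall>x. pic k x \<ge> 0"
    and pic_supp: "\<forall>k\<in>K. \<forall>x\<in>Rn (n k). x \<notin> \<Theta> k \<longrightarrow> pic k x = 0"
    and pic_meas: "\<forall>k\<in>K. (\<lambda>x. pic k (zpad (n k) x)) \<in> borel_measurable (Leb (n k))"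
    and pic_norm: "\<forall>k\<in>K. (\<integral>\<^sup>+x. ennreal (pic k (zpad (n k) x)) \<partial>Leb (n k)) = 1"
    \<comment> \<open>nu is a univariate probability density\<close>
    and nu_nonneg: "\<forall>x. \<nu> x \<ge> 0"
    and nu_meas: "\<nu> \<in> borel_measurable borel"
    and nu_norm: "(\<integral>\<^sup>+x. ennreal (\<nu> x) \<partial>lborel) = 1"
    \<comment> \<open>T_k diffeomorphisms with T_k # pi_k = nu^(n_k)\<close>
    and T_diffeo: "\<forall>k\<in>K. diffeo (n k) (T k)"
    and T_push: "\<forall>k\<in>K. pushforward_dens (n k) (T k) (pic k) (prod_dens \<nu> (n k))"
    \<comment> \<open>hbar_{k,k'} volume-preserving diffeomorphisms with hbar # nu^(n_k') = nu^(n_k')\<close>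
    and hbar_diffeo: "\<forall>k1\<in>K. \<forall>k2\<in>K. n k1 \<le> n k2 \<longrightarrow> diffeo (n k2) (hbar k1 k2)"
    and hbar_vol: "\<forall>k1\<in>K. \<forall>k2\<in>K. n k1 \<le> n k2 \<longrightarrow> volume_preserving (n k2) (hbar k1 k2)"
    and hbar_push: "\<forall>k1\<in>K. \<forall>k2\<in>K. n k1 \<le> n k2 \<longrightarrow>
        pushforward_dens (n k2) (hbar k1 k2) (prod_dens \<nu> (n k2)) (prod_dens \<nu> (n k2))"
    \<comment> \<open>model jump distributions j_k on K\<close>
    and j_nonneg: "\<forall>k1\<in>K. \<forall>k2\<in>K. j k1 k2 \<ge> 0"
    and j_sum: "\<forall>k1\<in>K. (j k1 has_sum 1) K"
    \<comment> \<open>balance condition on the model jumps\<close>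
    and balance: "\<forall>k1\<in>K. \<forall>k2\<in>K. piK k2 * j k2 k1 = piK k1 * j k1 k2"
    \<comment> \<open>a proposed across-model move from x = (k, theta) with auxiliary draw u\<close>
    and k_in: "k \<in> K" and k'_in: "k' \<in> K" and across: "k' \<noteq> k"
    and theta_in: "\<theta> \<in> \<Theta> k"
    and x_supp: "piK k * pic k \<theta> > 0"
    and j_pos: "j k k' > 0"
    and u_in: "u \<in> Rn (n k' - n k)"
    and u_supp: "prod_dens \<nu> (n k' - n k) u > 0"
  shows "accept n piK pic j \<nu> T hbar k \<theta> u k' = 1"
proof -
  have piK_pos: "piK k > 0" and pic_pos: "pic k \<theta> > 0"
  proof -
    have "piK k \<ge> 0" "pic k \<theta> \<ge> 0" using piK_nonneg pic_nonneg k_in by auto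
    then show "piK k > 0" "pic k \<theta> > 0" using x_supp
      by (metis less_eq_real_def mult_zero_left mult_zero_right)+
  qed
  have bal: "piK k' * j k' k = piK k * j k k'" using balance k_in k'_in by blast
  have th: "\<theta> \<in> Rn (n k)" using Theta_sub theta_in k_in by blast
  have Tk: "diffeo (n k) (T k)" and Tk': "diffeo (n k') (T k')" using T_diffeo k_in k'_in by auto
  have pushk: "\<And>x. x \<in> Rn (n k) \<Longrightarrow> pic k x = prod_dens \<nu> (n k) (T k x) * \<bar>jacdet (n k) (T k) x\<bar>"
    using T_push k_in unfolding pushforward_dens_def by blast
  have pushk': "\<And>x. x \<in> Rn (n k') \<Longrightarrow> pic k' x = prod_dens \<nu> (n k') (T k' x) * \<bar>jacdet (n k') (T k') x\<bar>"
    using T_push k'_in unfolding pushforward_dens_def by blast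
  have jpos: "j k k' \<noteq> 0" using j_pos by simp
  obtain AT where AT: "hj (n k) (n k) (T k) AT \<theta>"
    using C1_hj[of "n k" "n k" "T k" \<theta>] Tk th unfolding diffeo_def by blast
  have JT: "jacdet (n k) (T k) \<theta> = detn (n k) AT" by (rule jacdet_hj[OF th AT])
  have pick: "pic k \<theta> = prod_dens \<nu> (n k) (T k \<theta>) * \<bar>detn (n k) AT\<bar>" using pushk[OF th] JT by simp
  have Pz: "prod_dens \<nu> (n k) (T k \<theta>) \<noteq> 0" and JTnz: "detn (n k) AT \<noteq> 0"
    using pic_pos pick by auto
  have Tmap: "\<forall>z\<in>Rn (n k). T k z \<in> Rn (n k)" using diffeo_facts(1)[OF Tk] by blast
  show ?thesis
  proof (cases "n k \<le> n k'")
    case le: True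
    define D where "D = n k'"
    define a where "a = n k"
    have aD: "a \<le> D" using le unfolding a_def D_def .
    define H where "H = hbar k k'"
    define S' where "S' = inv_into (Rn D) (T k')"
    have Hd: "diffeo D H" using hbar_diffeo k_in k'_in le unfolding H_def D_def by blast
    have Hvol: "\<And>x. x \<in> Rn D \<Longrightarrow> \<bar>jacdet D H x\<bar> = 1"
      using hbar_vol k_in k'_in le unfolding H_def D_def volume_preserving_def by blast
    have Hpush: "\<And>x. x \<in> Rn D \<Longrightarrow> prod_dens \<nu> D x = prod_dens \<nu> D (H x) * \<bar>jacdet D H x\<bar>"
      using hbar_push k_in k'_in le unfolding H_def D_def pushforward_dens_def by blast
    define v where "v = joinv a \<theta> u"
    have vdef': "joinv (n k) \<theta> u = v" unfolding v_def a_def ..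
    have tv: "takev a v = \<theta>" unfolding v_def a_def by (rule takev_joinv[OF th])
    have dv: "dropv a v = u" unfolding v_def by (rule dropv_joinv)
    have vR: "v \<in> Rn D" using u_in th aD unfolding v_def Rn_def joinv_def a_def D_def by auto
    have hm: "hmap n T hbar k k' = (\<lambda>v. S' (H (Gm a (T k) v)))"
      unfolding hmap_def Gm_def S'_def H_def a_def D_def using le by (intro ext) simp
    define z where "z = T k \<theta>"
    define q where "q = joinv a z u"
    have Gv: "Gm a (T k) v = q" unfolding Gm_def q_def z_def tv dv ..
    have qR: "q \<in> Rn D" using Gm_map[OF Tmap[folded a_def] aD vR] Gv by simp
    define y where "y = H q"
    have yR: "y \<in> Rn D" unfolding y_def using diffeo_facts(1)[OF Hd qR] .
    define \<theta>' where "\<theta>' = S' y"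
    have thR: "\<theta>' \<in> Rn D" unfolding \<theta>'_def S'_def using diffeo_facts(2)[OF Tk'[folded D_def] yR] .
    have Tth: "T k' \<theta>' = y" unfolding \<theta>'_def S'_def using diffeo_facts(3)[OF Tk'[folded D_def] yR] .
    have hv: "hmap n T hbar k k' v = \<theta>'" unfolding hm Gv \<theta>'_def y_def ..
    obtain AH where AH: "hj D D H AH q" using C1_hj[of D D H q] Hd qR unfolding diffeo_def by blast
    obtain AS where AS: "hj D D S' AS y" using C1_hj[of D D S' y] Tk' yR unfolding diffeo_def S'_def D_def by blast
    have AT': "hj a a (T k) AT (takev a v)" using AT tv unfolding a_def by simp
    have B1: "hj D D (Gm a (T k)) (blk a AT) v" by (rule hj_block[OF AT' aD])
    have B2: "hj D D (\<lambda>x. H (Gm a (T k) x)) (\<lambda>i j. \<Sum>l<D. AH i l * blk a AT l j) v"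
      by (rule hj_chain[OF B1 AH[folded Gv]]) (use Gm_map[OF Tmap[folded a_def] aD] in blast)
    have B3: "hj D D (\<lambda>x. S' (H (Gm a (T k) x))) (\<lambda>i j. \<Sum>l<D. AS i l * (\<Sum>m<D. AH l m * blk a AT m j)) v"
      by (rule hj_chain[OF B2 AS[unfolded y_def, folded Gv]])
         (use Gm_map[OF Tmap[folded a_def] aD] diffeo_facts(1)[OF Hd] in blast)
    have Jh: "jacdet D (hmap n T hbar k k') v = detn D AS * (detn D AH * detn a AT)"
      unfolding hm using jacdet_hj[OF vR B3] by (simp add: detn_mmul detn_blk[OF aD])
    have JH: "\<bar>detn D AH\<bar> = 1" using Hvol[OF qR] jacdet_hj[OF qR AH] by simp
    have JS: "jacdet D S' y = detn D AS" by (rule jacdet_hj[OF yR AS])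
    have inv1: "jacdet D (T k') \<theta>' * detn D AS = 1"
      using jac_inv[OF Tk'[folded D_def] yR] JS unfolding \<theta>'_def S'_def by simp
    have pick': "pic k' \<theta>' = prod_dens \<nu> D y * \<bar>jacdet D (T k') \<theta>'\<bar>"
      using pushk'[OF thR[unfolded D_def]] Tth unfolding D_def by simp
    have Pq: "prod_dens \<nu> D q = prod_dens \<nu> D y" using Hpush[OF qR] Hvol[OF qR] unfolding y_def by simp
    have Pq2: "prod_dens \<nu> D q = prod_dens \<nu> a z * prod_dens \<nu> (D - a) u"
      using pd_split[OF aD, of \<nu> q] unfolding q_def by (simp add: pd_joinv dropv_joinv)
    have u'0: "prod_dens \<nu> (n k - n k') (dropv (n k') \<theta>') = 1" using le by (simp add: pd0)
    have maxD: "max (n k) (n k') = D" using le unfolding D_def by simp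
    have tth: "takev (n k') \<theta>' = \<theta>'" using takev_id[OF thR] unfolding D_def .
    have num: "piK k' * pic k' \<theta>' * j k' k * prod_dens \<nu> (n k - n k') (dropv (n k') \<theta>')
        = (piK k * j k k' * prod_dens \<nu> a z * prod_dens \<nu> (D - a) u) * \<bar>jacdet D (T k') \<theta>'\<bar>"
      unfolding u'0 pick' Pq[symmetric] Pq2 using bal by (simp add: algebra_simps)
    have den: "piK k * pic k \<theta> * j k k' * prod_dens \<nu> (n k' - n k) u
        = (piK k * j k k' * prod_dens \<nu> a z * prod_dens \<nu> (D - a) u) * \<bar>detn a AT\<bar>"
      unfolding pick z_def a_def D_def by (simp add: algebra_simps)
    have cnz: "piK k * j k k' * prod_dens \<nu> a z * prod_dens \<nu> (D - a) u \<noteq> 0"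
      using piK_pos jpos Pz u_supp unfolding z_def a_def D_def by auto
    have "accept n piK pic j \<nu> T hbar k \<theta> u k' =
      min 1 (((piK k * j k k' * prod_dens \<nu> a z * prod_dens \<nu> (D - a) u) * \<bar>jacdet D (T k') \<theta>'\<bar>)
        / ((piK k * j k k' * prod_dens \<nu> a z * prod_dens \<nu> (D - a) u) * \<bar>detn a AT\<bar>)
        * (\<bar>detn D AS\<bar> * \<bar>detn a AT\<bar>))"
      unfolding accept_def Let_def maxD vdef' hv tth unfolding num den Jh
      using JH by (simp add: abs_mult)
    also have "\<dots> = 1"
      by (rule final_alg[OF cnz]) (use JTnz inv1 a_def in \<open>auto simp: abs_mult[symmetric]\<close>)
    finally show ?thesis .
  next
    case gt: False
    define D where "D = n k"
    define a where "a = n k'"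
    have aD: "a \<le> D" using gt unfolding a_def D_def by simp
    have le': "n k' \<le> n k" using gt by simp
    define H where "H = hbar k' k"
    define SH where "SH = inv_into (Rn D) H"
    define S' where "S' = inv_into (Rn a) (T k')"
    have Hd: "diffeo D H" using hbar_diffeo k_in k'_in le' unfolding H_def D_def by blast
    have Hvol: "\<And>x. x \<in> Rn D \<Longrightarrow> \<bar>jacdet D H x\<bar> = 1"
      using hbar_vol k_in k'_in le' unfolding H_def D_def volume_preserving_def by blast
    have Hpush: "\<And>x. x \<in> Rn D \<Longrightarrow> prod_dens \<nu> D x = prod_dens \<nu> D (H x) * \<bar>jacdet D H x\<bar>"
      using hbar_push k_in k'_in le' unfolding H_def D_def pushforward_dens_def by blast
    have u0: "u = (\<lambda>i. 0)" using u_in gt by (intro Rn0) simp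
    have vdef': "joinv (n k) \<theta> u = \<theta>"
      using th u0 unfolding joinv_def Rn_def by (intro ext) auto
    have hm: "hmap n T hbar k k' = (\<lambda>v. Gm a S' (SH (T k v)))"
      unfolding hmap_def Gm_def S'_def H_def SH_def a_def D_def Let_def using gt by (intro ext) simp
    define r where "r = T k \<theta>"
    have rR: "r \<in> Rn D" unfolding r_def D_def using Tmap th by blast
    define zu where "zu = SH r"
    have zuR: "zu \<in> Rn D" unfolding zu_def SH_def using diffeo_facts(2)[OF Hd rR] .
    have Hzu: "H zu = r" unfolding zu_def SH_def using diffeo_facts(3)[OF Hd rR] .
    define tz where "tz = takev a zu"
    have tzR: "tz \<in> Rn a" unfolding tz_def by (rule takev_Rn)
    define \<theta>' where "\<theta>' = S' tz"
    have thR: "\<theta>' \<in> Rn a" unfolding \<theta>'_def S'_def using diffeo_facts(2)[OF Tk'[folded a_def] tzR] .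
    have Tth: "T k' \<theta>' = tz" unfolding \<theta>'_def S'_def using diffeo_facts(3)[OF Tk'[folded a_def] tzR] .
    define w where "w = Gm a S' zu"
    have w: "w = joinv a \<theta>' (dropv a zu)" unfolding w_def Gm_def \<theta>'_def tz_def ..
    have hv: "hmap n T hbar k k' \<theta> = w" unfolding hm w_def zu_def r_def ..
    have tw: "takev (n k') w = \<theta>'" unfolding w a_def[symmetric] by (rule takev_joinv[OF thR])
    have dw: "dropv (n k') w = dropv a zu" unfolding w a_def[symmetric] by (rule dropv_joinv)
    obtain ASH where ASH: "hj D D SH ASH r" using C1_hj[of D D SH r] Hd rR unfolding diffeo_def SH_def by blast
    obtain AS where AS: "hj a a S' AS tz" using C1_hj[of a a S' tz] Tk' tzR unfolding diffeo_def S'_def a_def by blast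
    have AT': "hj D D (T k) AT \<theta>" using AT unfolding D_def .
    have B1: "hj D D (\<lambda>x. SH (T k x)) (\<lambda>i j. \<Sum>l<D. ASH i l * AT l j) \<theta>"
      by (rule hj_chain[OF AT' ASH[unfolded r_def]]) (use Tmap D_def in blast)
    have Bb: "hj D D (Gm a S') (blk a AS) zu" by (rule hj_block[OF AS[unfolded tz_def] aD])
    have B2: "hj D D (\<lambda>x. Gm a S' (SH (T k x))) (\<lambda>i j. \<Sum>l<D. blk a AS i l * (\<Sum>m<D. ASH l m * AT m j)) \<theta>"
      by (rule hj_chain[OF B1 Bb[unfolded zu_def r_def]])
         (use Tmap diffeo_facts(2)[OF Hd] D_def SH_def in auto)
    have thD: "\<theta> \<in> Rn D" using th unfolding D_def .
    have Jh: "jacdet D (hmap n T hbar k k') \<theta> = detn a AS * (detn D ASH * detn D AT)"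
      unfolding hm using jacdet_hj[OF thD B2] by (simp add: detn_mmul detn_blk[OF aD])
    have JSH: "\<bar>detn D ASH\<bar> = 1"
    proof -
      have "jacdet D H zu * jacdet D SH r = 1"
        using jac_inv[OF Hd rR] unfolding zu_def SH_def .
      moreover have "jacdet D SH r = detn D ASH" by (rule jacdet_hj[OF rR ASH])
      ultimately have "\<bar>jacdet D H zu\<bar> * \<bar>detn D ASH\<bar> = 1" by (metis abs_mult abs_one)
      then show ?thesis using Hvol[OF zuR] by simp
    qed
    have inv1: "jacdet a (T k') \<theta>' * detn a AS = 1"
      using jac_inv[OF Tk'[folded a_def] tzR] jacdet_hj[OF tzR AS] unfolding \<theta>'_def S'_def by simp
    have pick': "pic k' \<theta>' = prod_dens \<nu> a tz * \<bar>jacdet a (T k') \<theta>'\<bar>"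
      using pushk'[OF thR[unfolded a_def]] Tth unfolding a_def by simp
    have Ptz: "prod_dens \<nu> a tz = prod_dens \<nu> a zu" unfolding tz_def by (rule pd_takev)
    have PH: "prod_dens \<nu> D zu = prod_dens \<nu> D r" using Hpush[OF zuR] Hvol[OF zuR] Hzu by simp
    have u'0: "prod_dens \<nu> (n k' - n k) u = 1" using gt by (simp add: pd0)
    have maxD: "max (n k) (n k') = D" using gt unfolding D_def by simp
    have pick2: "pic k \<theta> = prod_dens \<nu> D r * \<bar>detn D AT\<bar>" using pick unfolding r_def D_def .
    have num: "piK k' * pic k' (takev (n k') w) * j k' k * prod_dens \<nu> (n k - n k') (dropv (n k') w)
        = (piK k * j k k' * prod_dens \<nu> D r) * \<bar>jacdet a (T k') \<theta>'\<bar>"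
    proof -
      have e: "prod_dens \<nu> a tz * prod_dens \<nu> (n k - n k') (dropv a zu) = prod_dens \<nu> D r"
        using pd_split[OF aD, of \<nu> zu] Ptz PH unfolding a_def D_def by simp
      have "piK k' * pic k' (takev (n k') w) * j k' k * prod_dens \<nu> (n k - n k') (dropv (n k') w)
        = (piK k' * j k' k) * (prod_dens \<nu> a tz * prod_dens \<nu> (n k - n k') (dropv a zu)) * \<bar>jacdet a (T k') \<theta>'\<bar>"
        unfolding tw dw pick' by (simp only: mult_ac)
      then show ?thesis unfolding e bal by (simp only: mult_ac)
    qed
    have den: "piK k * pic k \<theta> * j k k' * prod_dens \<nu> (n k' - n k) u
        = (piK k * j k k' * prod_dens \<nu> D r) * \<bar>detn D AT\<bar>"
      unfolding pick2 u'0 by (simp add: algebra_simps)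
    have cnz: "piK k * j k k' * prod_dens \<nu> D r \<noteq> 0"
      using piK_pos jpos Pz unfolding r_def D_def by auto
    have "accept n piK pic j \<nu> T hbar k \<theta> u k' =
      min 1 (((piK k * j k k' * prod_dens \<nu> D r) * \<bar>jacdet a (T k') \<theta>'\<bar>)
        / ((piK k * j k k' * prod_dens \<nu> D r) * \<bar>detn D AT\<bar>)
        * (\<bar>detn a AS\<bar> * \<bar>detn D AT\<bar>))"
      unfolding accept_def Let_def maxD vdef' hv unfolding num den Jh
      using JSH by (simp add: abs_mult)
    also have "\<dots> = 1"
      by (rule final_alg[OF cnz]) (use JTnz inv1 D_def in \<open>auto simp: abs_mult[symmetric]\<close>)
    finally show ?thesis .
  qed
qed

end
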